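(* Let $G=(V,E)$ be a (not necessarily connected) graph with $|V|=n\ge1$ and adjacency matrix $A$, let $m\ge1$, and assume $\bar K_m+G$ is not a complete graph. Define \begin{itemize} \item $\Lambda_0=\{-m\}$ if $m\ge2$ and $m$ is an eigenvalue of $J-A$, and $\Lambda_0=\emptyset$ otherwise; \item $\Lambda_1$ = the set of $\alpha\in\mathbb{R}\setminus(\mathrm{ev}(A)\cup\{0,-m,-2m\})$ satisfying $(\alpha+2m)\langle\mathbf 1,(A-\alpha I)^{-1}\mathbf 1\rangle-m=0$; \item $\Lambda_2=\{-2m\}$ if $-2m\in\mathrm{ev}(A)$, and $\Lambda_2=\emptyset$ otherwise; \item $\Lambda_3$ = the set of $\alpha\in\mathrm{ev}(A)\setminus\{0,-m,-2m\}$ for which there is $g\in\mathbb{R}^n$ with $Ag=\alpha g$, $\langle g,g\rangle=1$, $\langle\mathbf 1,g\rangle=0$. \end{itemize} Then \[ \mathrm{QEC}(\bar K_m+G)=-\tilde\alpha-2,\qquad \tilde\alpha=\min(\Lambda_0\cup\Lambda_1\cup\Lambda_2\cup\Lambda_3). \]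
   Context: For a finite connected graph $H=(V,E)$ with $|V|\ge2$ and distance matrix $D$ (graph distance), $\mathrm{QEC}(H)=\max\{\langle f,Df\rangle : f\in\mathbb{R}^V,\ \langle f,f\rangle=1,\ \langle\mathbf 1,f\rangle=0\}$, with $\mathbf 1$ the all-ones vector. $\bar K_m$ is the graph on $m$ vertices with no edges. The join $G_1+G_2$ of disjoint graphs has vertex set $V_1\cup V_2$ and edge set $E_1\cup E_2\cup\{\{x,y\}:x\in V_1,y\in V_2\}$. $J$ is the $n\times n$ all-ones matrix, $I$ the identity, $\mathrm{ev}(A)$ the set of eigenvalues of $A$. *)

theory Defs
  imports "HOL-Analysis.Analysis"
begin

definition graph_dist :: "('v \<Rightarrow> 'v \<Rightarrow> bool) \<Rightarrow> 'v \<Rightarrow> 'v \<Rightarrow> nat" where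
  "graph_dist E x y = (LEAST k. (E ^^ k) x y)"

definition QEC :: "('v::finite \<Rightarrow> 'v \<Rightarrow> bool) \<Rightarrow> real" where
  "QEC E = Sup {(\<Sum>x\<in>UNIV. \<Sum>y\<in>UNIV. real (graph_dist E x y) * f x * f y) | f :: 'v \<Rightarrow> real.
                 (\<Sum>x\<in>UNIV. f x * f x) = 1 \<and> (\<Sum>x\<in>UNIV. f x) = 0}"

definition join_empty :: "('n \<Rightarrow> 'n \<Rightarrow> bool) \<Rightarrow> ('m + 'n) \<Rightarrow> ('m + 'n) \<Rightarrow> bool" where
  "join_empty E u v = (case (u, v) of
      (Inl _, Inl _) \<Rightarrow> False
    | (Inr a, Inr b) \<Rightarrow> E a b
    | _ \<Rightarrow> True)"

definition complete_graph :: "('v \<Rightarrow> 'v \<Rightarrow> bool) \<Rightarrow> bool" where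
  "complete_graph E \<longleftrightarrow> (\<forall>x y. x \<noteq> y \<longrightarrow> E x y)"

definition adj_matrix :: "('n::finite \<Rightarrow> 'n \<Rightarrow> bool) \<Rightarrow> real^'n^'n" where
  "adj_matrix E = (\<chi> i j. if E i j then 1 else 0)"

definition all_ones_matrix :: "real^'n::finite^'n" where
  "all_ones_matrix = (\<chi> i j. 1)"

definition all_ones_vec :: "real^'n::finite" where
  "all_ones_vec = (\<chi> i. 1)"

definition ev :: "real^'n::finite^'n \<Rightarrow> real set" where
  "ev M = {\<alpha>. \<exists>v. v \<noteq> 0 \<and> M *v v = \<alpha> *\<^sub>R v}"

end

theory Submission
  imports Defs
begin

lemma ev_indep_aux:
  fixes M :: "real^'k::finite^'k" and v :: "real \<Rightarrow> real^'k"
  assumes v: "\<And>a. a \<in> ev M \<Longrightarrow> v a \<noteq> 0 \<and> M *v v a = a *\<^sub>R v a"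
  shows "finite S \<Longrightarrow> S \<subseteq> ev M \<Longrightarrow> (\<forall>c. (\<Sum>a\<in>S. c a *\<^sub>R v a) = 0 \<longrightarrow> (\<forall>a\<in>S. c a = 0))"
proof (induction S rule: finite_induct)
  case empty
  then show ?case by simp
next
  case (insert b S)
  show ?case
  proof (intro allI impI)
    fix c assume h: "(\<Sum>a\<in>insert b S. c a *\<^sub>R v a) = 0"
    have h1: "c b *\<^sub>R v b + (\<Sum>a\<in>S. c a *\<^sub>R v a) = 0" using h insert by simp
    have "M *v (c b *\<^sub>R v b + (\<Sum>a\<in>S. c a *\<^sub>R v a)) = 0" using h1 by simp
    hence h2': "(c b * b) *\<^sub>R v b + (\<Sum>a\<in>S. c a *\<^sub>R (M *v v a)) = 0"
      using insert v by (simp add: matrix_vector_right_distrib matrix_vector_mult_scaleR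
          linear_sum[OF matrix_vector_mul_linear] o_def)
    have "(\<Sum>a\<in>S. c a *\<^sub>R (M *v v a)) = (\<Sum>a\<in>S. (c a * a) *\<^sub>R v a)"
      by (rule sum.cong) (use insert v in auto)
    with h2' have h2: "(c b * b) *\<^sub>R v b + (\<Sum>a\<in>S. (c a * a) *\<^sub>R v a) = 0" by simp
    have e1: "(\<Sum>a\<in>S. (c a * (a - b)) *\<^sub>R v a) = (\<Sum>a\<in>S. (c a * a) *\<^sub>R v a) - (\<Sum>a\<in>S. (c a * b) *\<^sub>R v a)"
      by (simp add: sum_subtractf[symmetric] right_diff_distrib scaleR_diff_left)
    have e2: "(\<Sum>a\<in>S. (c a * b) *\<^sub>R v a) = b *\<^sub>R (\<Sum>a\<in>S. c a *\<^sub>R v a)"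
      by (simp add: scaleR_sum_right mult.commute)
    have e3: "(\<Sum>a\<in>S. c a *\<^sub>R v a) = - (c b *\<^sub>R v b)" using h1 by (metis add_diff_cancel_left' diff_0)
    have e4: "(\<Sum>a\<in>S. (c a * a) *\<^sub>R v a) = - ((c b * b) *\<^sub>R v b)" using h2 by (metis add_diff_cancel_left' diff_0)
    have "(\<Sum>a\<in>S. (c a * (a - b)) *\<^sub>R v a) = 0"
      unfolding e1 e2 e3 e4 by (simp add: mult.commute)
    note z = this
    have IH: "\<forall>c. (\<Sum>a\<in>S. c a *\<^sub>R v a) = 0 \<longrightarrow> (\<forall>a\<in>S. c a = 0)"
      using insert.IH insert.prems by simp
    have "\<forall>a\<in>S. c a * (a - b) = 0" using IH[rule_format, OF z] by simp
    hence cS: "\<forall>a\<in>S. c a = 0" using insert by auto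
    hence "c b *\<^sub>R v b = 0" using h1 by simp
    hence "c b = 0" using v insert by auto
    thus "\<forall>a\<in>insert b S. c a = 0" using cS by simp
  qed
qed

lemma ev_finite: "finite (ev (M::real^'k::finite^'k))"
proof (rule ccontr)
  assume inf: "infinite (ev M)"
  define v where "v a = (SOME w. w \<noteq> 0 \<and> M *v w = a *\<^sub>R w)" for a
  have v: "v a \<noteq> 0 \<and> M *v v a = a *\<^sub>R v a" if "a \<in> ev M" for a
  proof -
    have "\<exists>w. w \<noteq> 0 \<and> M *v w = a *\<^sub>R w" using that by (simp add: ev_def)
    thus ?thesis unfolding v_def by (rule someI_ex)
  qed
  obtain S where S: "S \<subseteq> ev M" "finite S" "card S = Suc CARD('k)"
    using infinite_arbitrarily_large[OF inf] by blast
  have inj: "inj_on v S"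
  proof
    fix a b assume ab: "a \<in> S" "b \<in> S" "v a = v b"
    have "a *\<^sub>R v a = M *v v a" using v[of a] ab S by auto
    also have "\<dots> = M *v v b" using ab by simp
    also have "\<dots> = b *\<^sub>R v a" using v[of b] ab S by auto
    finally have "a *\<^sub>R v a = b *\<^sub>R v a" .
    thus "a = b" using v[of a] ab S by auto
  qed
  have "independent (v ` S)"
  proof (rule independent_if_scalars_zero)
    show "finite (v ` S)" using S by simp
    fix f x assume h: "(\<Sum>x\<in>v ` S. f x *\<^sub>R x) = 0" "x \<in> v ` S"
    have "(\<Sum>a\<in>S. (f \<circ> v) a *\<^sub>R v a) = 0" using h(1) by (simp add: sum.reindex[OF inj])
    hence "\<forall>a\<in>S. (f \<circ> v) a = 0" using ev_indep_aux[OF v S(2) S(1)] by blast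
    thus "f x = 0" using h(2) by auto
  qed
  hence "card (v ` S) \<le> DIM(real^'k)" using independent_bound by blast
  hence "card S \<le> CARD('k)" using card_image[OF inj] by simp
  thus False using S by simp
qed

lemma sum_UNIV_Plus:
  "(\<Sum>z\<in>(UNIV::('a::finite + 'b::finite) set). g z) = (\<Sum>x\<in>UNIV. g (Inl x)) + (\<Sum>a\<in>UNIV. g (Inr a))"
  using sum.Plus[of "UNIV::'a set" "UNIV::'b set" g] by (simp add: o_def)

lemma join_irrefl:
  assumes "\<And>x. \<not> E x x"
  shows "\<not> join_empty E z z"
  using assms by (cases z) (auto simp: join_empty_def)

lemma join_dist:
  fixes E :: "'n::finite \<Rightarrow> 'n \<Rightarrow> bool"
  shows "graph_dist (join_empty E :: ('m::finite + 'n) \<Rightarrow> _) x y =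
     (if x = y then 0 else if join_empty E x y then 1 else 2)"
proof -
  let ?H = "join_empty E :: ('m::finite + 'n) \<Rightarrow> _"
  have h0: "(?H ^^ 0) x y \<longleftrightarrow> x = y" by simp
  have h1: "(?H ^^ 1) x y \<longleftrightarrow> ?H x y" by (simp only: relpowp_1)
  have h2: "(?H ^^ 2) x y \<longleftrightarrow> (\<exists>z. ?H x z \<and> ?H z y)"
    by (auto simp: numeral_2_eq_2 relcompp_apply)
  show ?thesis
  proof (cases "x = y")
    case True
    then show ?thesis unfolding graph_dist_def by (simp add: h0)
  next
    case ne: False
    show ?thesis
    proof (cases "?H x y")
      case True
      have "(LEAST k. (?H ^^ k) x y) = 1"
      proof (rule Least_equality)
        show "(?H ^^ 1) x y" using True h1 by blast
        fix k assume "(?H ^^ k) x y"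
        thus "1 \<le> k" using ne by (cases k) (auto simp only: h0)
      qed
      then show ?thesis using ne True unfolding graph_dist_def by simp
    next
      case False
      have ex: "\<exists>z. ?H x z \<and> ?H z y"
      proof (cases x; cases y)
        fix a b assume "x = Inl a" "y = Inl b"
        thus ?thesis by (intro exI[of _ "Inr undefined"]) (simp add: join_empty_def)
      next
        fix a b assume "x = Inr a" "y = Inr b"
        thus ?thesis by (intro exI[of _ "Inl undefined"]) (simp add: join_empty_def)
      next
        fix a b assume "x = Inl a" "y = Inr b"
        thus ?thesis using False by (simp add: join_empty_def)
      next
        fix a b assume "x = Inr a" "y = Inl b"
        thus ?thesis using False by (simp add: join_empty_def)
      qed
      have "(LEAST k. (?H ^^ k) x y) = 2"
      proof (rule Least_equality)
        show "(?H ^^ 2) x y" using ex h2 by blast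
        fix k assume k: "(?H ^^ k) x y"
        show "2 \<le> k"
        proof (rule ccontr)
          assume "\<not> 2 \<le> k"
          hence "k = 0 \<or> k = 1" by auto
          thus False using k ne False by auto
        qed
      qed
      then show ?thesis using ne False unfolding graph_dist_def by simp
    qed
  qed
qed

definition Qf :: "('v::finite \<Rightarrow> 'v \<Rightarrow> bool) \<Rightarrow> ('v \<Rightarrow> real) \<Rightarrow> real" where
  "Qf H f = (\<Sum>x\<in>UNIV. \<Sum>y\<in>UNIV. (if H x y then 1 else 0) * f x * f y)"

lemma R_eq:
  fixes H :: "'v::finite \<Rightarrow> 'v \<Rightarrow> bool"
  assumes irr: "\<And>x. \<not> H x x"
    and d: "\<And>x y. graph_dist H x y = (if x = y then 0 else if H x y then 1 else 2)"
    and s0: "(\<Sum>x\<in>UNIV. f x) = 0" and s1: "(\<Sum>x\<in>UNIV. f x * f x) = 1"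
  shows "(\<Sum>x\<in>UNIV. \<Sum>y\<in>UNIV. real (graph_dist H x y) * f x * f y) = - 2 - Qf H f"
proof -
  have "(\<Sum>x\<in>UNIV. \<Sum>y\<in>UNIV. real (graph_dist H x y) * f x * f y)
      = (\<Sum>x\<in>UNIV. \<Sum>y\<in>UNIV. 2 * (f x * f y) - 2 * ((if x = y then 1 else 0) * f x * f y)
             - (if H x y then 1 else 0) * f x * f y)"
    by (rule sum.cong[OF refl], rule sum.cong[OF refl]) (auto simp: d irr)
  also have "\<dots> = 2 * (\<Sum>x\<in>UNIV. \<Sum>y\<in>UNIV. f x * f y)
      - 2 * (\<Sum>x\<in>UNIV. \<Sum>y\<in>UNIV. (if x = y then 1 else 0) * f x * f y) - Qf H f"
    by (simp add: Qf_def sum_subtractf sum_distrib_left)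
  also have "(\<Sum>x\<in>UNIV. \<Sum>y\<in>UNIV. f x * f y) = 0"
    by (simp add: sum_distrib_left[symmetric] s0)
  also have "(\<Sum>x\<in>UNIV. \<Sum>y\<in>UNIV. (if x = y then 1 else 0) * f x * f y) = 1"
  proof -
    have "\<And>x. (\<Sum>y\<in>UNIV. (if x = y then 1 else 0) * f x * f y) = f x * f x"
    proof -
      fix x
      have "(\<Sum>y\<in>UNIV. (if x = y then 1 else 0) * f x * f y) = (\<Sum>y\<in>UNIV. if x = y then f x * f y else 0)"
        by (rule sum.cong) auto
      thus "(\<Sum>y\<in>UNIV. (if x = y then 1 else 0) * f x * f y) = f x * f x" by simp
    qed
    thus ?thesis by (simp add: s1)
  qed
  finally show ?thesis by simp
qed

lemma Q_join:
  fixes E :: "'n::finite \<Rightarrow> 'n \<Rightarrow> bool"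
  shows "Qf (join_empty E :: ('m::finite + 'n) \<Rightarrow> _) f =
     2 * (\<Sum>x\<in>UNIV. f (Inl x)) * (\<Sum>a\<in>UNIV. f (Inr a))
     + (\<Sum>a\<in>UNIV. \<Sum>b\<in>UNIV. (if E a b then 1 else 0) * f (Inr a) * f (Inr b))"
proof -
  have "Qf (join_empty E :: ('m::finite + 'n) \<Rightarrow> _) f =
     (\<Sum>x\<in>UNIV. \<Sum>b\<in>UNIV. f (Inl x) * f (Inr b)) + (\<Sum>a\<in>UNIV. \<Sum>x\<in>UNIV. f (Inr a) * f (Inl x))
     + (\<Sum>a\<in>UNIV. \<Sum>b\<in>UNIV. (if E a b then 1 else 0) * f (Inr a) * f (Inr b))"
    by (simp add: Qf_def sum_UNIV_Plus join_empty_def sum.distrib)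
  also have "(\<Sum>a\<in>UNIV. \<Sum>x\<in>UNIV. f (Inr a) * f (Inl x)) = (\<Sum>x\<in>UNIV. \<Sum>b\<in>UNIV. f (Inl x) * f (Inr b))"
    by (subst sum.swap) (simp add: mult.commute)
  also have "(\<Sum>x\<in>UNIV. \<Sum>b\<in>UNIV. f (Inl x) * f (Inr b)) = (\<Sum>x\<in>UNIV. f (Inl x)) * (\<Sum>a\<in>UNIV. f (Inr a))"
    by (simp add: sum_product)
  finally show ?thesis by simp
qed

lemma Q_min_exists:
  fixes H :: "'v::finite \<Rightarrow> 'v \<Rightarrow> bool"
  assumes ne: "\<exists>f::'v\<Rightarrow>real. (\<Sum>x\<in>UNIV. f x) = 0 \<and> (\<Sum>x\<in>UNIV. f x * f x) = 1"
  shows "\<exists>f0. (\<Sum>x\<in>UNIV. f0 x) = 0 \<and> (\<Sum>x\<in>UNIV. f0 x * f0 x) = 1 \<and>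
     (\<forall>f. (\<Sum>x\<in>UNIV. f x) = 0 \<and> (\<Sum>x\<in>UNIV. f x * f x) = 1 \<longrightarrow> Qf H f0 \<le> Qf H f)"
proof -
  define K where "K = {v :: real^'v. (\<Sum>i\<in>UNIV. v$i) = 0 \<and> (\<Sum>i\<in>UNIV. v$i * v$i) = 1}"
  have "closed K" unfolding K_def
    by (intro closed_Collect_conj closed_Collect_eq continuous_intros)
  moreover have "bounded K"
  proof -
    have "K \<subseteq> cball 0 1"
    proof
      fix v assume "v \<in> K"
      hence "v \<bullet> v = 1" unfolding K_def by (simp add: inner_vec_def)
      hence "norm v = 1" by (simp add: norm_eq_sqrt_inner)
      thus "v \<in> cball 0 1" by simp
    qed
    thus ?thesis using bounded_cball bounded_subset by blast
  qed
  ultimately have cK: "compact K" using compact_eq_bounded_closed by blast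
  obtain f :: "'v \<Rightarrow> real" where f: "(\<Sum>x\<in>UNIV. f x) = 0" "(\<Sum>x\<in>UNIV. f x * f x) = 1" using ne by blast
  have "vec_lambda f \<in> K" using f unfolding K_def by simp
  hence neK: "K \<noteq> {}" by blast
  have cont: "continuous_on K (\<lambda>v. Qf H (vec_nth v))"
    unfolding Qf_def by (intro continuous_intros)
  obtain v0 where v0: "v0 \<in> K" "\<And>v. v \<in> K \<Longrightarrow> Qf H (vec_nth v0) \<le> Qf H (vec_nth v)"
    using continuous_attains_inf[OF cK neK cont] by blast
  show ?thesis
  proof (intro exI[of _ "vec_nth v0"] conjI allI impI)
    show "(\<Sum>x\<in>UNIV. v0 $ x) = 0" "(\<Sum>x\<in>UNIV. v0 $ x * v0 $ x) = 1" using v0(1) unfolding K_def by auto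
    fix g :: "'v \<Rightarrow> real" assume g: "(\<Sum>x\<in>UNIV. g x) = 0 \<and> (\<Sum>x\<in>UNIV. g x * g x) = 1"
    have "vec_lambda g \<in> K" using g unfolding K_def by simp
    moreover have "vec_nth (vec_lambda g) = g" by (rule ext) simp
    ultimately show "Qf H (vec_nth v0) \<le> Qf H g" using v0(2) by metis
  qed
qed

lemma Qf_scale: "Qf H (\<lambda>x. c * f x) = c * c * Qf H f"
  unfolding Qf_def by (simp add: sum_distrib_left mult_ac)

lemma Q_lower:
  fixes H :: "'v::finite \<Rightarrow> 'v \<Rightarrow> bool"
  assumes min: "\<And>f. (\<Sum>x\<in>UNIV. f x) = 0 \<Longrightarrow> (\<Sum>x\<in>UNIV. f x * f x) = 1 \<Longrightarrow> lam \<le> Qf H f"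
    and g: "(\<Sum>x\<in>UNIV. g x) = 0"
  shows "lam * (\<Sum>x\<in>UNIV. g x * g x) \<le> Qf H g"
proof (cases "(\<Sum>x\<in>UNIV. g x * g x) = 0")
  case True
  hence "\<forall>x. g x * g x = 0" using sum_nonneg_eq_0_iff[of UNIV "\<lambda>x. g x * g x"] by simp
  hence "\<forall>x. g x = 0" by simp
  hence "Qf H g = 0" unfolding Qf_def by simp
  then show ?thesis using True by simp
next
  case False
  define S where "S = (\<Sum>x\<in>UNIV. g x * g x)"
  have Spos: "S > 0" using False unfolding S_def by (simp add: order_le_neq_trans[OF sum_nonneg] )
  define c where "c = 1 / sqrt S"
  have cc: "c * c * S = 1" unfolding c_def using Spos by (simp add: real_sqrt_mult[symmetric])
  have "(\<Sum>x\<in>UNIV. c * g x) = 0" using g by (simp add: sum_distrib_left[symmetric])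
  moreover have "(\<Sum>x\<in>UNIV. c * g x * (c * g x)) = 1"
    using cc unfolding S_def by (simp add: sum_distrib_left mult_ac)
  ultimately have "lam \<le> Qf H (\<lambda>x. c * g x)" by (rule min)
  hence "lam \<le> c * c * Qf H g" by (simp add: Qf_scale)
  hence "lam * S \<le> c * c * S * Qf H g" using Spos by (simp add: mult_right_mono mult_ac)
  thus ?thesis using cc unfolding S_def by simp
qed

lemma quad_nonneg_lin0:
  fixes b c :: real
  assumes "\<And>t. 0 \<le> 2 * t * b + t * t * c"
  shows "b = 0"
proof (rule ccontr)
  assume nb: "b \<noteq> 0"
  obtain d where dd: "d = \<bar>c\<bar> + 1" by blast
  define t where "t = - b / d"
  have d: "d > 0" using dd by simp
  have "0 \<le> 2 * t * b + t * t * c" by (rule assms)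
  hence "0 \<le> (2 * t * b + t * t * c) * (d * d)" using d by simp
  also have "\<dots> = b * b * (c - 2 * d)"
    unfolding t_def using d by (simp add: field_simps)
  finally have "0 \<le> b * b * (c - 2 * d)" .
  moreover have "b * b > 0" using nb by (metis not_real_square_gt_zero)
  moreover have "c - 2 * d < 0" using dd by linarith
  moreover have "b * b * (c - 2 * d) < 0" by (rule mult_pos_neg) (use calculation in auto)
  ultimately show False by linarith
qed

lemma Qf_add:
  fixes H :: "'v::finite \<Rightarrow> 'v \<Rightarrow> bool"
  assumes sym: "\<And>x y. H x y \<Longrightarrow> H y x"
  shows "Qf H (\<lambda>x. f x + t * h x) = Qf H f + 2 * t * (\<Sum>x\<in>UNIV. h x * (\<Sum>y\<in>UNIV. (if H x y then 1 else 0) * f y))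
     + t * t * Qf H h"
proof -
  let ?a = "\<lambda>x y. (if H x y then 1 else 0) :: real"
  have asym: "?a x y = ?a y x" for x y using sym by auto
  have "Qf H (\<lambda>x. f x + t * h x) = (\<Sum>x\<in>UNIV. \<Sum>y\<in>UNIV. ?a x y * f x * f y
      + t * (?a x y * f x * h y) + t * (?a x y * h x * f y) + t * t * (?a x y * h x * h y))"
    unfolding Qf_def by (rule sum.cong[OF refl], rule sum.cong[OF refl]) (simp add: algebra_simps)
  also have "\<dots> = Qf H f + t * (\<Sum>x\<in>UNIV. \<Sum>y\<in>UNIV. ?a x y * f x * h y)
     + t * (\<Sum>x\<in>UNIV. \<Sum>y\<in>UNIV. ?a x y * h x * f y) + t * t * Qf H h"
    unfolding Qf_def by (simp add: sum.distrib sum_distrib_left)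
  also have "(\<Sum>x\<in>UNIV. \<Sum>y\<in>UNIV. ?a x y * f x * h y) = (\<Sum>x\<in>UNIV. \<Sum>y\<in>UNIV. ?a x y * h x * f y)"
    by (subst sum.swap) (simp add: asym mult_ac)
  also have "(\<Sum>x\<in>UNIV. \<Sum>y\<in>UNIV. ?a x y * h x * f y) = (\<Sum>x\<in>UNIV. h x * (\<Sum>y\<in>UNIV. ?a x y * f y))"
    by (simp add: sum_distrib_left mult_ac)
  finally show ?thesis by simp
qed

lemma stationary:
  fixes H :: "'v::finite \<Rightarrow> 'v \<Rightarrow> bool"
  assumes sym: "\<And>x y. H x y \<Longrightarrow> H y x"
    and f0: "(\<Sum>x\<in>UNIV. f0 x * f0 x) = 1" and lam: "lam = Qf H f0"
    and low: "\<And>g. (\<Sum>x\<in>UNIV. g x) = 0 \<Longrightarrow> lam * (\<Sum>x\<in>UNIV. g x * g x) \<le> Qf H g"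
    and s0: "(\<Sum>x\<in>UNIV. f0 x) = 0"
  shows "(\<Sum>y\<in>UNIV. (if H p y then 1 else 0) * f0 y) - lam * f0 p =
         (\<Sum>y\<in>UNIV. (if H q y then 1 else 0) * f0 y) - lam * f0 q"
proof -
  define w where "w x = (\<Sum>y\<in>UNIV. (if H x y then 1 else 0) * f0 y) - lam * f0 x" for x
  define h :: "'v \<Rightarrow> real" where "h x = (if x = p then 1 else 0) - (if x = q then 1 else 0)" for x
  have hs: "(\<Sum>x\<in>UNIV. h x) = 0" unfolding h_def by (simp add: sum_subtractf)
  define b where "b = (\<Sum>x\<in>UNIV. h x * w x)"
  define P where "P = (\<Sum>x\<in>UNIV. h x * f0 x)"
  define C where "C = (\<Sum>x\<in>UNIV. h x * (\<Sum>y\<in>UNIV. (if H x y then 1 else 0) * f0 y))"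
  define Hh where "Hh = (\<Sum>x\<in>UNIV. h x * h x)"
  have e2: "b = C - lam * P"
    unfolding b_def w_def C_def P_def by (simp add: algebra_simps sum_subtractf sum_distrib_left)
  have "0 \<le> 2 * t * b + t * t * (Qf H h - lam * Hh)" for t
  proof -
    have "(\<Sum>x\<in>UNIV. f0 x + t * h x) = 0" using s0 hs by (simp add: sum.distrib sum_distrib_left[symmetric])
    hence l: "lam * (\<Sum>x\<in>UNIV. (f0 x + t * h x) * (f0 x + t * h x)) \<le> Qf H (\<lambda>x. f0 x + t * h x)"
      by (rule low)
    have e1: "(\<Sum>x\<in>UNIV. (f0 x + t * h x) * (f0 x + t * h x)) = 1 + 2 * t * P + t * t * Hh"
      using f0 unfolding P_def Hh_def by (simp add: algebra_simps sum.distrib sum_distrib_left)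
    have e3: "Qf H (\<lambda>x. f0 x + t * h x) = lam + 2 * t * C + t * t * Qf H h"
      using Qf_add[of H, OF sym, where f=f0 and t=t and h=h] lam unfolding C_def by simp
    have "2 * t * b + t * t * (Qf H h - lam * Hh) = (lam + 2 * t * C + t * t * Qf H h) - lam * (1 + 2 * t * P + t * t * Hh)"
      unfolding e2 by (simp add: algebra_simps)
    thus ?thesis using l e1 e3 by simp
  qed
  hence "b = 0" by (rule quad_nonneg_lin0)
  moreover have "b = w p - w q"
  proof -
    have d: "(\<Sum>x\<in>UNIV. (if x = r then 1 else 0) * w x) = w r" for r
      by (subst sum.cong[OF refl, of _ _ "\<lambda>x. if x = r then w x else 0"]) auto
    show ?thesis unfolding b_def h_def by (simp add: left_diff_distrib sum_subtractf d)
  qed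
  ultimately show ?thesis unfolding w_def by simp
qed

lemma J_mult: "all_ones_matrix *v x = (all_ones_vec \<bullet> x) *\<^sub>R (all_ones_vec :: real^'n::finite)"
  by (simp add: vec_eq_iff matrix_vector_mult_def all_ones_matrix_def all_ones_vec_def inner_vec_def)

lemma ones_ones: "all_ones_vec \<bullet> (all_ones_vec::real^'n::finite) = real CARD('n)"
  by (simp add: all_ones_vec_def inner_vec_def)

lemma ones_inner: "all_ones_vec \<bullet> (x::real^'n::finite) = (\<Sum>i\<in>UNIV. x$i)"
  by (simp add: all_ones_vec_def inner_vec_def)

lemma adj_transpose:
  assumes "\<And>x y. E x y \<Longrightarrow> E y x"
  shows "transpose (adj_matrix E) = adj_matrix (E::'n::finite \<Rightarrow> _)"
  using assms by (auto simp: vec_eq_iff transpose_def adj_matrix_def)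

lemma inner_sym_matrix:
  fixes A :: "real^'n::finite^'n"
  assumes "transpose A = A"
  shows "v \<bullet> (A *v g) = (A *v v) \<bullet> g"
proof -
  have "v \<bullet> (A *v g) = (v v* A) \<bullet> g" by (simp add: dot_lmul_matrix)
  also have "v v* A = A *v v" using vector_transpose_matrix[of v A] assms by simp
  finally show ?thesis .
qed

definition Fk :: "real \<Rightarrow> real^'n::finite \<Rightarrow> ('m::finite + 'n) \<Rightarrow> real" where
  "Fk k g z = (case z of Inl x \<Rightarrow> k | Inr a \<Rightarrow> g$a)"

lemma Fk_sum: "(\<Sum>z\<in>UNIV. (Fk k g :: ('m::finite + 'n::finite) \<Rightarrow> real) z) = real CARD('m) * k + all_ones_vec \<bullet> g"
  by (simp add: Fk_def sum_UNIV_Plus ones_inner)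

lemma Fk_sq: "(\<Sum>z\<in>UNIV. (Fk k g :: ('m::finite + 'n::finite) \<Rightarrow> real) z * Fk k g z) = real CARD('m) * k * k + g \<bullet> g"
  by (simp add: Fk_def sum_UNIV_Plus inner_vec_def)

lemma Fk_Q: "Qf (join_empty E) (Fk k g :: ('m::finite + 'n::finite) \<Rightarrow> real) =
   2 * (real CARD('m) * k) * (all_ones_vec \<bullet> g) + g \<bullet> (adj_matrix E *v g)"
  by (simp add: Q_join Fk_def ones_inner inner_vec_def matrix_vector_mult_def adj_matrix_def all_ones_vec_def
      sum_distrib_left mult_ac)

lemma inner_pos: "(g::real^'n::finite) \<noteq> 0 \<Longrightarrow> g \<bullet> g > 0"
  by simp

lemma sq_pos: "(g::real^'n::finite) \<noteq> 0 \<Longrightarrow> 0 < real m * k * k + g \<bullet> g"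
proof -
  assume "g \<noteq> 0"
  hence "g \<bullet> g > 0" by simp
  moreover have "0 \<le> real m * (k * k)" by simp
  hence "0 \<le> real m * k * k" by (simp add: mult.assoc)
  ultimately show ?thesis by linarith
qed

lemma wit_L0:
  fixes E :: "'n::finite \<Rightarrow> 'n \<Rightarrow> bool"
  assumes m: "m = CARD('m::finite)" and g: "g \<noteq> 0" "(all_ones_matrix - adj_matrix E) *v g = real m *\<^sub>R g"
  shows "\<exists>F::('m + 'n) \<Rightarrow> real. (\<Sum>z\<in>UNIV. F z) = 0 \<and> (\<Sum>z\<in>UNIV. F z * F z) > 0 \<and>
     Qf (join_empty E) F = - real m * (\<Sum>z\<in>UNIV. F z * F z)"
proof -
  define s where "s = all_ones_vec \<bullet> g"
  have mpos: "real m > 0" using m by simp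
  have Ag: "adj_matrix E *v g = s *\<^sub>R all_ones_vec - real m *\<^sub>R g"
    using g(2) by (simp add: matrix_vector_mult_diff_rdistrib J_mult s_def algebra_simps)
  have gAg: "g \<bullet> (adj_matrix E *v g) = s * s - real m * (g \<bullet> g)"
    unfolding Ag by (simp add: inner_diff_right s_def inner_commute)
  define k where "k = - s / real m"
  let ?F = "Fk k g :: ('m + 'n) \<Rightarrow> real"
  show ?thesis
  proof (intro exI[of _ ?F] conjI)
    show "(\<Sum>z\<in>UNIV. ?F z) = 0" using mpos by (simp add: Fk_sum m[symmetric] k_def s_def)
    show "(\<Sum>z\<in>UNIV. ?F z * ?F z) > 0" unfolding Fk_sq m[symmetric]
      by (rule sq_pos[OF g(1)])
    show "Qf (join_empty E) ?F = - real m * (\<Sum>z\<in>UNIV. ?F z * ?F z)"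
      unfolding Fk_Q Fk_sq m[symmetric] gAg using mpos by (simp add: k_def s_def field_simps)
  qed
qed

lemma wit_L2:
  fixes E :: "'n::finite \<Rightarrow> 'n \<Rightarrow> bool"
  assumes m: "m = CARD('m::finite)" and g: "g \<noteq> 0" "adj_matrix E *v g = (- 2 * real m) *\<^sub>R g"
  shows "\<exists>F::('m + 'n) \<Rightarrow> real. (\<Sum>z\<in>UNIV. F z) = 0 \<and> (\<Sum>z\<in>UNIV. F z * F z) > 0 \<and>
     Qf (join_empty E) F = (- 2 * real m) * (\<Sum>z\<in>UNIV. F z * F z)"
proof -
  define s where "s = all_ones_vec \<bullet> g"
  have mpos: "real m > 0" using m by simp
  have gAg: "g \<bullet> (adj_matrix E *v g) = - 2 * real m * (g \<bullet> g)"
    unfolding g(2) by simp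
  define k where "k = - s / real m"
  let ?F = "Fk k g :: ('m + 'n) \<Rightarrow> real"
  show ?thesis
  proof (intro exI[of _ ?F] conjI)
    show "(\<Sum>z\<in>UNIV. ?F z) = 0" using mpos by (simp add: Fk_sum m[symmetric] k_def s_def)
    show "(\<Sum>z\<in>UNIV. ?F z * ?F z) > 0" unfolding Fk_sq m[symmetric]
      by (rule sq_pos[OF g(1)])
    show "Qf (join_empty E) ?F = (- 2 * real m) * (\<Sum>z\<in>UNIV. ?F z * ?F z)"
      unfolding Fk_Q Fk_sq m[symmetric] gAg using mpos by (simp add: k_def s_def field_simps)
  qed
qed

lemma wit_L3:
  fixes E :: "'n::finite \<Rightarrow> 'n \<Rightarrow> bool"
  assumes g: "adj_matrix E *v g = a *\<^sub>R g" "g \<bullet> g = 1" "all_ones_vec \<bullet> g = 0"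
  shows "\<exists>F::('m::finite + 'n) \<Rightarrow> real. (\<Sum>z\<in>UNIV. F z) = 0 \<and> (\<Sum>z\<in>UNIV. F z * F z) > 0 \<and>
     Qf (join_empty E) F = a * (\<Sum>z\<in>UNIV. F z * F z)"
proof -
  let ?F = "Fk 0 g :: ('m + 'n) \<Rightarrow> real"
  show ?thesis
  proof (intro exI[of _ ?F] conjI)
    show "(\<Sum>z\<in>UNIV. ?F z) = 0" by (simp add: Fk_sum g)
    show "(\<Sum>z\<in>UNIV. ?F z * ?F z) > 0" unfolding Fk_sq using g by simp
    show "Qf (join_empty E) ?F = a * (\<Sum>z\<in>UNIV. ?F z * ?F z)"
      unfolding Fk_Q Fk_sq using g by simp
  qed
qed

lemma inv_apply:
  fixes M :: "real^'n::finite^'n"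
  assumes "\<And>x. M *v x = 0 \<Longrightarrow> x = 0"
  shows "M *v (matrix_inv M *v y) = y"
proof -
  have "invertible M" using assms matrix_left_invertible_ker invertible_left_inverse by blast
  hence "M ** matrix_inv M = mat 1"
    unfolding invertible_def matrix_inv_def by (rule someI2_ex) auto
  thus ?thesis by (simp add: matrix_vector_mul_assoc)
qed

lemma notev_ker:
  fixes A :: "real^'n::finite^'n"
  assumes "a \<notin> ev A"
  shows "(A - a *\<^sub>R mat 1) *v x = 0 \<Longrightarrow> x = 0"
  using assms unfolding ev_def
  by (auto simp: matrix_vector_mult_diff_rdistrib scaleR_matrix_vector_assoc[symmetric])

lemma wit_L1:
  fixes E :: "'n::finite \<Rightarrow> 'n \<Rightarrow> bool"
  assumes m: "m = CARD('m::finite)" and a: "a \<notin> ev (adj_matrix E)"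
    and eq: "(a + 2 * real m) * (all_ones_vec \<bullet> (matrix_inv (adj_matrix E - a *\<^sub>R mat 1) *v all_ones_vec)) - real m = 0"
  shows "\<exists>F::('m + 'n) \<Rightarrow> real. (\<Sum>z\<in>UNIV. F z) = 0 \<and> (\<Sum>z\<in>UNIV. F z * F z) > 0 \<and>
     Qf (join_empty E) F = a * (\<Sum>z\<in>UNIV. F z * F z)"
proof -
  let ?M = "adj_matrix E - a *\<^sub>R mat 1"
  define h where "h = matrix_inv ?M *v all_ones_vec"
  have Mh: "?M *v h = all_ones_vec" unfolding h_def by (rule inv_apply[OF notev_ker[OF a]])
  have Ah: "adj_matrix E *v h = a *\<^sub>R h + all_ones_vec"
    using Mh by (simp add: matrix_vector_mult_diff_rdistrib scaleR_matrix_vector_assoc[symmetric] algebra_simps)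
  have hne: "h \<noteq> 0"
  proof
    assume "h = 0"
    hence "all_ones_vec = (0::real^'n)" using Mh by simp
    thus False by (simp add: all_ones_vec_def vec_eq_iff)
  qed
  define t where "t = all_ones_vec \<bullet> h"
  have mpos: "real m > 0" using m by simp
  have teq: "(a + 2 * real m) * t = real m" using eq unfolding t_def h_def by simp
  have hAh: "h \<bullet> (adj_matrix E *v h) = a * (h \<bullet> h) + t"
    unfolding Ah t_def by (simp add: inner_add_right inner_commute)
  define k where "k = - t / real m"
  let ?F = "Fk k h :: ('m + 'n) \<Rightarrow> real"
  show ?thesis
  proof (intro exI[of _ ?F] conjI)
    show "(\<Sum>z\<in>UNIV. ?F z) = 0" using mpos by (simp add: Fk_sum m[symmetric] k_def t_def)
    show "(\<Sum>z\<in>UNIV. ?F z * ?F z) > 0" unfolding Fk_sq m[symmetric]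
      by (rule sq_pos[OF hne])
    have "a * t * t = real m * t - 2 * real m * t * t"
      using arg_cong[OF teq, of "\<lambda>x. t * x"] by (simp add: algebra_simps)
    then show "Qf (join_empty E) ?F = a * (\<Sum>z\<in>UNIV. ?F z * ?F z)"
      unfolding Fk_Q Fk_sq m[symmetric] hAh using mpos
      by (simp add: k_def t_def[symmetric] field_simps)
  qed
qed

lemma L1_ev:
  fixes E :: "'n::finite \<Rightarrow> 'n \<Rightarrow> bool"
  assumes a: "a \<notin> ev (adj_matrix E)" and mpos: "real m > 0"
    and eq: "(a + 2 * real m) * (all_ones_vec \<bullet> (matrix_inv (adj_matrix E - a *\<^sub>R mat 1) *v all_ones_vec)) - real m = 0"
  shows "a \<in> ev ((mat 1 - (1 / (real m + real CARD('n))) *\<^sub>R all_ones_matrix) ** (adj_matrix E - 2 *\<^sub>R all_ones_matrix))"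
proof -
  let ?M = "adj_matrix E - a *\<^sub>R mat 1"
  let ?one = "all_ones_vec :: real^'n"
  define N where "N = real CARD('n)"
  define h where "h = matrix_inv ?M *v ?one"
  have Mh: "?M *v h = ?one" unfolding h_def by (rule inv_apply[OF notev_ker[OF a]])
  have Ah: "adj_matrix E *v h = a *\<^sub>R h + ?one"
    using Mh by (simp add: matrix_vector_mult_diff_rdistrib scaleR_matrix_vector_assoc[symmetric] algebra_simps)
  have hne: "h \<noteq> 0"
  proof
    assume "h = 0"
    hence "?one = 0" using Mh by simp
    thus False by (simp add: all_ones_vec_def vec_eq_iff)
  qed
  define t where "t = ?one \<bullet> h"
  have teq: "(a + 2 * real m) * t = real m" using eq unfolding t_def h_def by simp
  define c where "c = 1 / (real m + N)"
  have Bh: "(adj_matrix E - 2 *\<^sub>R all_ones_matrix) *v h = a *\<^sub>R h + (1 - 2 * t) *\<^sub>R ?one"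
    by (simp add: matrix_vector_mult_diff_rdistrib scaleR_matrix_vector_assoc[symmetric] Ah J_mult t_def algebra_simps)
  have oB: "?one \<bullet> (a *\<^sub>R h + (1 - 2 * t) *\<^sub>R ?one) = a * t + (1 - 2 * t) * N"
    by (simp add: inner_add_right t_def ones_ones N_def)
  have coef: "(1 - 2 * t) - c * (a * t + (1 - 2 * t) * N) = 0"
  proof -
    have pos: "real m + N > 0" using mpos unfolding N_def by simp
    have "(1 - 2 * t) * (real m + N) = a * t + (1 - 2 * t) * N" using teq by (simp add: algebra_simps)
    thus ?thesis unfolding c_def using pos by (simp add: field_simps)
  qed
  have "((mat 1 - c *\<^sub>R all_ones_matrix) ** (adj_matrix E - 2 *\<^sub>R all_ones_matrix)) *v h
      = (mat 1 - c *\<^sub>R all_ones_matrix) *v (a *\<^sub>R h + (1 - 2 * t) *\<^sub>R ?one)"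
    by (simp add: matrix_vector_mul_assoc[symmetric] Bh)
  also have "\<dots> = (a *\<^sub>R h + (1 - 2 * t) *\<^sub>R ?one) - (c * (a * t + (1 - 2 * t) * N)) *\<^sub>R ?one"
    by (simp add: matrix_vector_mult_diff_rdistrib scaleR_matrix_vector_assoc[symmetric] J_mult oB)
  also have "\<dots> = a *\<^sub>R h + ((1 - 2 * t) - c * (a * t + (1 - 2 * t) * N)) *\<^sub>R ?one"
    by (simp add: algebra_simps)
  also have "\<dots> = a *\<^sub>R h" using coef by simp
  finally show ?thesis unfolding ev_def c_def N_def using hne by blast
qed

lemma noncomplete_wit:
  fixes E :: "'n::finite \<Rightarrow> 'n \<Rightarrow> bool"
  assumes sym: "\<And>x y. E x y \<Longrightarrow> E y x" and irr: "\<And>x. \<not> E x x"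
    and nc: "\<not> complete_graph (join_empty E :: ('m::finite + 'n) \<Rightarrow> _)"
  shows "\<exists>F::('m + 'n) \<Rightarrow> real. (\<Sum>z\<in>UNIV. F z) = 0 \<and> (\<Sum>z\<in>UNIV. F z * F z) = 6 \<and>
     Qf (join_empty E) F = -8"
proof -
  obtain x y :: "'m + 'n" where xy: "x \<noteq> y" "\<not> join_empty E x y" using nc unfolding complete_graph_def by blast
  show ?thesis
  proof (cases x)
    case (Inl a)
    then obtain b where b: "y = Inl b" "a \<noteq> b" using xy by (cases y) (auto simp: join_empty_def)
    define F :: "('m + 'n) \<Rightarrow> real" where "F z = (case z of Inl x \<Rightarrow> (if x = a then 1 else 0) + (if x = b then 1 else 0)
        | Inr c \<Rightarrow> (if c = undefined then -2 else 0))" for z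
    have s1: "(\<Sum>x\<in>UNIV. F (Inl x)) = 2" using b by (simp add: F_def sum.distrib)
    have s2: "(\<Sum>x\<in>UNIV. F (Inr x)) = -2" by (simp add: F_def)
    have p1: "F (Inl x) * F (Inl x) = (if x = a then 1 else 0) + (if x = b then 1 else 0)" for x
      using b by (auto simp: F_def)
    have q1: "(\<Sum>x\<in>UNIV. F (Inl x) * F (Inl x)) = 2" using b
      by (simp only: p1 sum.distrib) simp
    have p2: "F (Inr x) * F (Inr x) = (if x = undefined then 4 else 0)" for x
      by (auto simp: F_def)
    have q2: "(\<Sum>x\<in>UNIV. F (Inr x) * F (Inr x)) = 4"
      by (simp only: p2) simp
    have p3: "(if E c d then 1 else 0) * F (Inr c) * F (Inr d) = 0" for c d
      using irr by (auto simp: F_def)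
    have e: "(\<Sum>c\<in>UNIV. \<Sum>d\<in>UNIV. (if E c d then 1 else 0) * F (Inr c) * F (Inr d)) = 0"
      by (simp only: p3) simp
    show ?thesis
      by (intro exI[of _ F]) (simp add: sum_UNIV_Plus s1 s2 q1 q2 Q_join e)
  next
    case (Inr a)
    then obtain b where b: "y = Inr b" "a \<noteq> b" "\<not> E a b" using xy by (cases y) (auto simp: join_empty_def)
    have nba: "\<not> E b a" using b sym by blast
    define F :: "('m + 'n) \<Rightarrow> real" where "F z = (case z of Inr x \<Rightarrow> (if x = a then 1 else 0) + (if x = b then 1 else 0)
        | Inl c \<Rightarrow> (if c = undefined then -2 else 0))" for z
    have s1: "(\<Sum>x\<in>UNIV. F (Inr x)) = 2" using b by (simp add: F_def sum.distrib)
    have s2: "(\<Sum>x\<in>UNIV. F (Inl x)) = -2" by (simp add: F_def)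
    have p1: "F (Inr x) * F (Inr x) = (if x = a then 1 else 0) + (if x = b then 1 else 0)" for x
      using b by (auto simp: F_def)
    have q1: "(\<Sum>x\<in>UNIV. F (Inr x) * F (Inr x)) = 2" using b
      by (simp only: p1 sum.distrib) simp
    have p2: "F (Inl x) * F (Inl x) = (if x = undefined then 4 else 0)" for x
      by (auto simp: F_def)
    have q2: "(\<Sum>x\<in>UNIV. F (Inl x) * F (Inl x)) = 4"
      by (simp only: p2) simp
    have p3: "(if E c d then 1 else 0) * F (Inr c) * F (Inr d) = 0" for c d
      using irr b nba by (auto simp: F_def)
    have e: "(\<Sum>c\<in>UNIV. \<Sum>d\<in>UNIV. (if E c d then 1 else 0) * F (Inr c) * F (Inr d)) = 0"
      by (simp only: p3) simp
    show ?thesis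
      by (intro exI[of _ F]) (simp add: sum_UNIV_Plus s1 s2 q1 q2 Q_join e)
  qed
qed

lemma lam_in:
  fixes E :: "'n::finite \<Rightarrow> 'n \<Rightarrow> bool" and f0 :: "('m::finite + 'n) \<Rightarrow> real"
  assumes sym: "\<And>x y. E x y \<Longrightarrow> E y x"
    and m: "m = CARD('m)" and lamneg: "lam < -1"
    and s0: "(\<Sum>z\<in>UNIV. f0 z) = 0" and s1: "(\<Sum>z\<in>UNIV. f0 z * f0 z) = 1"
    and stat: "\<And>p q. (\<Sum>y\<in>UNIV. (if join_empty E p y then 1 else 0) * f0 y) - lam * f0 p =
         (\<Sum>y\<in>UNIV. (if join_empty E q y then 1 else 0) * f0 y) - lam * f0 q"
  shows "(m \<ge> 2 \<and> real m \<in> ev (all_ones_matrix - adj_matrix E) \<and> lam = - real m)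
    \<or> (lam \<notin> ev (adj_matrix E) \<union> {0, - real m, - 2 * real m} \<and>
        (lam + 2 * real m) * (all_ones_vec \<bullet> (matrix_inv (adj_matrix E - lam *\<^sub>R mat 1) *v all_ones_vec)) - real m = 0)
    \<or> (- 2 * real m \<in> ev (adj_matrix E) \<and> lam = - 2 * real m)
    \<or> (lam \<in> ev (adj_matrix E) - {0, - real m, - 2 * real m} \<and>
        (\<exists>g. adj_matrix E *v g = lam *\<^sub>R g \<and> g \<bullet> g = 1 \<and> all_ones_vec \<bullet> g = 0))"
proof -
  let ?A = "adj_matrix E"
  let ?one = "all_ones_vec :: real^'n"
  let ?w = "\<lambda>p. (\<Sum>y\<in>UNIV. (if (join_empty E :: ('m + 'n) \<Rightarrow> _) p y then 1 else 0) * f0 y) - lam * f0 p"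
  define g where "g = (\<chi> a. f0 (Inr a))"
  define s where "s = ?one \<bullet> g"
  have mpos: "real m > 0" using m by simp
  have lam0: "lam \<noteq> 0" using lamneg by simp
  have row1: "(\<Sum>y\<in>UNIV. (if (join_empty E :: ('m + 'n) \<Rightarrow> _) (Inl x) y then 1 else 0) * f0 y) = s" for x
    by (simp add: sum_UNIV_Plus join_empty_def s_def ones_inner g_def)
  have row2: "(\<Sum>y\<in>UNIV. (if (join_empty E :: ('m + 'n) \<Rightarrow> _) (Inr b) y then 1 else 0) * f0 y)
      = (\<Sum>x\<in>UNIV. f0 (Inl x)) + (?A *v g) $ b" for b
    by (simp add: sum_UNIV_Plus join_empty_def matrix_vector_mult_def adj_matrix_def g_def)
  define c0 where "c0 = ?w (Inl undefined)"
  define k where "k = (s - c0) / lam"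
  have kx: "f0 (Inl x) = k" for x
  proof -
    have "s - lam * f0 (Inl x) = c0" using stat[of "Inl x" "Inl undefined"] unfolding c0_def row1 by simp
    thus ?thesis unfolding k_def using lam0 by (simp add: field_simps)
  qed
  have f0F: "f0 = Fk k g"
    by (rule ext) (simp add: Fk_def kx g_def split: sum.split)
  have sum0: "real m * k + s = 0" using s0 unfolding f0F Fk_sum m s_def by simp
  have sq1: "real m * k * k + g \<bullet> g = 1" using s1 unfolding f0F Fk_sq m by simp
  have keq: "k = - s / real m" using sum0 mpos by (simp add: field_simps)
  have c0eq: "c0 = s - lam * k" using kx[of undefined] unfolding c0_def row1 by simp
  define \<beta> where "\<beta> = 2 * s - lam * k"
  have Ag: "?A *v g = lam *\<^sub>R g + \<beta> *\<^sub>R ?one"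
  proof -
    have "(?A *v g) $ b = lam * g $ b + \<beta>" for b
    proof -
      have "(\<Sum>x\<in>UNIV. f0 (Inl x)) + (?A *v g) $ b - lam * f0 (Inr b) = c0"
        using stat[of "Inr b" "Inl undefined"] unfolding c0_def row2 by simp
      moreover have "(\<Sum>x\<in>UNIV. f0 (Inl x)) = real m * k" using kx m by simp
      ultimately show ?thesis unfolding \<beta>_def c0eq g_def using sum0 by (simp add: algebra_simps)
    qed
    thus ?thesis by (simp add: vec_eq_iff all_ones_vec_def)
  qed
  have gnz: "g \<noteq> 0"
  proof
    assume "g = 0"
    hence "s = 0" unfolding s_def by simp
    hence "k = 0" using keq by simp
    thus False using sq1 \<open>g = 0\<close> by simp
  qed
  have \<beta>eq: "\<beta> = s * (2 * real m + lam) / real m"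
    unfolding \<beta>_def keq using mpos by (simp add: field_simps)
  show ?thesis
  proof (cases "lam = - real m")
    case True
    have "m \<ge> 2" using True lamneg by simp
    have "\<beta> = s" using True \<beta>eq mpos by (simp add: field_simps)
    hence "(all_ones_matrix - ?A) *v g = real m *\<^sub>R g"
      by (simp add: matrix_vector_mult_diff_rdistrib J_mult Ag True s_def[symmetric])
    hence "real m \<in> ev (all_ones_matrix - ?A)" unfolding ev_def using gnz by blast
    thus ?thesis using True \<open>m \<ge> 2\<close> by blast
  next
    case nm: False
    show ?thesis
    proof (cases "lam = - 2 * real m")
      case True
      have "\<beta> = 0" using True \<beta>eq by simp
      hence "?A *v g = lam *\<^sub>R g" using Ag by simp
      hence "lam \<in> ev ?A" unfolding ev_def using gnz by blast
      hence "- 2 * real m \<in> ev ?A" using True by simp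
      thus ?thesis using True by (intro disjI2 disjI1) (rule conjI)
    next
      case n2m: False
      show ?thesis
      proof (cases "lam \<in> ev ?A")
        case True
        then obtain v where v: "v \<noteq> 0" "?A *v v = lam *\<^sub>R v" unfolding ev_def by blast
        have tr: "transpose ?A = ?A" by (rule adj_transpose[OF sym])
        have "v \<bullet> (?A *v g) = (?A *v v) \<bullet> g" by (rule inner_sym_matrix[OF tr])
        hence "lam * (v \<bullet> g) + \<beta> * (v \<bullet> ?one) = lam * (v \<bullet> g)"
          unfolding Ag v(2) by (simp add: inner_add_right inner_commute)
        hence bv: "\<beta> * (v \<bullet> ?one) = 0" by simp
        have "\<exists>g. ?A *v g = lam *\<^sub>R g \<and> g \<bullet> g = 1 \<and> ?one \<bullet> g = 0"
        proof (cases "v \<bullet> ?one = 0")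
          case True
          define u where "u = (1 / norm v) *\<^sub>R v"
          have "?A *v u = lam *\<^sub>R u" unfolding u_def by (simp add: matrix_vector_mult_scaleR v(2))
          moreover have "u \<bullet> u = 1" unfolding u_def using v(1)
            by (simp add: power2_norm_eq_inner[symmetric] power2_eq_square)
          moreover have "?one \<bullet> u = 0" unfolding u_def using True by (simp add: inner_commute)
          ultimately show ?thesis by blast
        next
          case False
          hence "\<beta> = 0" using bv by simp
          hence "s * (lam + 2 * real m) = 0" using \<beta>eq mpos by (simp add: field_simps)
          moreover have "lam + 2 * real m \<noteq> 0" using n2m by simp
          ultimately have "s = 0" by simp
          hence "k = 0" using keq by simp
          hence "g \<bullet> g = 1" using sq1 by simp
          moreover have "?A *v g = lam *\<^sub>R g" using Ag \<open>\<beta> = 0\<close> by simp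
          moreover have "?one \<bullet> g = 0" using \<open>s = 0\<close> s_def by simp
          ultimately show ?thesis by blast
        qed
        thus ?thesis using True lam0 nm n2m by blast
      next
        case False
        let ?M = "?A - lam *\<^sub>R mat 1"
        define h where "h = matrix_inv ?M *v ?one"
        have Mh: "?M *v h = ?one" unfolding h_def by (rule inv_apply[OF notev_ker[OF False]])
        have Mg: "?M *v g = \<beta> *\<^sub>R ?one"
          by (simp add: matrix_vector_mult_diff_rdistrib scaleR_matrix_vector_assoc[symmetric] Ag)
        have "?M *v (g - \<beta> *\<^sub>R h) = 0"
          by (simp add: matrix_vector_mult_diff_distrib matrix_vector_mult_scaleR Mg Mh)
        hence "g - \<beta> *\<^sub>R h = 0" by (rule notev_ker[OF False])
        hence gh: "g = \<beta> *\<^sub>R h" by simp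
        have sne: "s \<noteq> 0"
        proof
          assume "s = 0"
          hence "\<beta> = 0" using \<beta>eq by simp
          thus False using gh gnz by simp
        qed
        have "s = \<beta> * (?one \<bullet> h)" unfolding s_def gh by simp
        define X where "X = (2 * real m + lam) * (?one \<bullet> h)"
        have "s = s * X / real m" using \<open>s = \<beta> * (?one \<bullet> h)\<close> unfolding \<beta>eq X_def by simp
        hence "s * real m = (s * X / real m) * real m" by simp
        also have "\<dots> = s * X" using mpos by simp
        finally have "s * real m = s * X" .
        hence "real m = (2 * real m + lam) * (?one \<bullet> h)" using sne unfolding X_def by simp
        hence "(lam + 2 * real m) * (?one \<bullet> h) - real m = 0" by (simp add: algebra_simps)
        thus ?thesis using False lam0 nm n2m unfolding h_def by blast
      qed
    qed
  qed
qed

theorem theorem3p7: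
  fixes E :: "'n::finite \<Rightarrow> 'n \<Rightarrow> bool"
    and m :: nat
    and \<Lambda>0 \<Lambda>1 \<Lambda>2 \<Lambda>3 :: "real set"
    and A :: "real^'n^'n"
  assumes sym: "\<And>x y. E x y \<Longrightarrow> E y x"
    and irrefl: "\<And>x. \<not> E x x"
    and m_def: "m = CARD('m::finite)"
    and not_complete: "\<not> complete_graph (join_empty E :: ('m + 'n) \<Rightarrow> ('m + 'n) \<Rightarrow> bool)"
    and A_def: "A = adj_matrix E"
    and L0: "\<Lambda>0 = (if m \<ge> 2 \<and> real m \<in> ev (all_ones_matrix - A) then {- real m} else {})"
    and L1: "\<Lambda>1 = {\<alpha>. \<alpha> \<notin> ev A \<union> {0, - real m, - 2 * real m} \<and>
               (\<alpha> + 2 * real m) * (all_ones_vec \<bullet> (matrix_inv (A - \<alpha> *\<^sub>R mat 1) *v all_ones_vec))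
                 - real m = 0}"
    and L2: "\<Lambda>2 = (if - 2 * real m \<in> ev A then {- 2 * real m} else {})"
    and L3: "\<Lambda>3 = {\<alpha>. \<alpha> \<in> ev A - {0, - real m, - 2 * real m} \<and>
               (\<exists>g. A *v g = \<alpha> *\<^sub>R g \<and> g \<bullet> g = 1 \<and> all_ones_vec \<bullet> g = 0)}"
  shows "QEC (join_empty E :: ('m + 'n) \<Rightarrow> ('m + 'n) \<Rightarrow> bool) = - Min (\<Lambda>0 \<union> \<Lambda>1 \<union> \<Lambda>2 \<union> \<Lambda>3) - 2"
proof -
  let ?H = "join_empty E :: ('m + 'n) \<Rightarrow> _"
  let ?L = "\<Lambda>0 \<union> \<Lambda>1 \<union> \<Lambda>2 \<union> \<Lambda>3"
  have irrH: "\<And>z. \<not> ?H z z" by (rule join_irrefl) (rule irrefl)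
  have symH: "\<And>x y. ?H x y \<Longrightarrow> ?H y x" using sym by (auto simp: join_empty_def split: sum.splits)
  have dH: "\<And>x y. graph_dist ?H x y = (if x = y then 0 else if ?H x y then 1 else 2)" by (rule join_dist)
  have mpos: "real m > 0" using m_def by simp
  obtain F :: "('m + 'n) \<Rightarrow> real" where F: "(\<Sum>z\<in>UNIV. F z) = 0" "(\<Sum>z\<in>UNIV. F z * F z) = 6" "Qf ?H F = -8"
    using noncomplete_wit[OF sym irrefl not_complete] by blast
  have ne: "\<exists>f::('m + 'n) \<Rightarrow> real. (\<Sum>x\<in>UNIV. f x) = 0 \<and> (\<Sum>x\<in>UNIV. f x * f x) = 1"
  proof (intro exI conjI)
    define c where "c = 1 / sqrt 6"
    have cc: "c * c * 6 = 1" unfolding c_def by (simp add: real_sqrt_mult[symmetric])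
    show "(\<Sum>x\<in>UNIV. c * F x) = 0" using F(1) by (simp add: sum_distrib_left[symmetric])
    show "(\<Sum>x\<in>UNIV. c * F x * (c * F x)) = 1" using F(2) cc
      by (simp add: sum_distrib_left[symmetric] mult_ac)
  qed
  obtain f0 :: "('m + 'n) \<Rightarrow> real" where f0: "(\<Sum>x\<in>UNIV. f0 x) = 0" "(\<Sum>x\<in>UNIV. f0 x * f0 x) = 1"
    and min: "\<And>f. (\<Sum>x\<in>UNIV. f x) = 0 \<and> (\<Sum>x\<in>UNIV. f x * f x) = 1 \<longrightarrow> Qf ?H f0 \<le> Qf ?H f"
    using Q_min_exists[OF ne, of ?H] by blast
  define lam where "lam = Qf ?H f0"
  have low: "\<And>g. (\<Sum>x\<in>UNIV. g x) = 0 \<Longrightarrow> lam * (\<Sum>x\<in>UNIV. g x * g x) \<le> Qf ?H g"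
    by (rule Q_lower) (use min in \<open>auto simp: lam_def\<close>)
  have wit: "lam \<le> y" if ex: "\<exists>G::('m + 'n) \<Rightarrow> real. (\<Sum>z\<in>UNIV. G z) = 0 \<and> (\<Sum>z\<in>UNIV. G z * G z) > 0 \<and>
     Qf ?H G = y * (\<Sum>z\<in>UNIV. G z * G z)" for y
  proof -
    obtain G :: "('m + 'n) \<Rightarrow> real" where G: "(\<Sum>z\<in>UNIV. G z) = 0" "(\<Sum>z\<in>UNIV. G z * G z) > 0"
       "Qf ?H G = y * (\<Sum>z\<in>UNIV. G z * G z)" using ex by blast
    have "lam * (\<Sum>z\<in>UNIV. G z * G z) \<le> y * (\<Sum>z\<in>UNIV. G z * G z)" using low[OF G(1)] G(3) by simp
    thus ?thesis using G(2) by (rule mult_right_le_imp_le)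
  qed
  have lamneg: "lam < -1"
  proof -
    have "lam * 6 \<le> -8" using low[OF F(1)] F by simp
    thus ?thesis by simp
  qed
  have stat: "\<And>p q. (\<Sum>y\<in>UNIV. (if ?H p y then 1 else 0) * f0 y) - lam * f0 p =
         (\<Sum>y\<in>UNIV. (if ?H q y then 1 else 0) * f0 y) - lam * f0 q"
    by (rule stationary[OF symH f0(2) lam_def low f0(1)])
  have inL: "lam \<in> ?L"
    using lam_in[OF sym m_def lamneg f0(1) f0(2) stat] unfolding L0 L1 L2 L3 A_def by auto
  have geL: "lam \<le> y" if yL: "y \<in> ?L" for y
  proof -
    consider "y \<in> \<Lambda>0" | "y \<in> \<Lambda>1" | "y \<in> \<Lambda>2" | "y \<in> \<Lambda>3" using yL by blast
    thus ?thesis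
    proof cases
      case 1
      hence y: "y = - real m" "real m \<in> ev (all_ones_matrix - adj_matrix E)" using L0 A_def by (auto split: if_splits)
      then obtain g where "g \<noteq> 0" "(all_ones_matrix - adj_matrix E) *v g = real m *\<^sub>R g" unfolding ev_def by blast
      from wit_L0[OF m_def this] show ?thesis using wit y by simp
    next
      case 2
      hence "y \<notin> ev (adj_matrix E)"
        "(y + 2 * real m) * (all_ones_vec \<bullet> (matrix_inv (adj_matrix E - y *\<^sub>R mat 1) *v all_ones_vec)) - real m = 0"
        using L1 A_def by auto
      from wit_L1[OF m_def this] show ?thesis using wit by simp
    next
      case 3
      hence y: "y = - 2 * real m" "- 2 * real m \<in> ev (adj_matrix E)" using L2 A_def by (auto split: if_splits)
      then obtain g where "g \<noteq> 0" "adj_matrix E *v g = (- 2 * real m) *\<^sub>R g" unfolding ev_def by blast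
      from wit_L2[OF m_def this] show ?thesis using wit y by simp
    next
      case 4
      then obtain g where "adj_matrix E *v g = y *\<^sub>R g" "g \<bullet> g = 1" "all_ones_vec \<bullet> g = 0"
        using L3 A_def by auto
      from wit_L3[OF this] show ?thesis by (rule wit)
    qed
  qed
  have finL: "finite ?L"
  proof -
    have "\<Lambda>0 \<subseteq> {- real m}" using L0 by auto
    hence f0': "finite \<Lambda>0" by (rule finite_subset) simp
    have "\<Lambda>2 \<subseteq> {- 2 * real m}" using L2 by auto
    hence f2: "finite \<Lambda>2" by (rule finite_subset) simp
    have "\<Lambda>3 \<subseteq> ev A" using L3 by auto
    hence f3: "finite \<Lambda>3" using ev_finite finite_subset by blast
    have "\<Lambda>1 \<subseteq> ev ((mat 1 - (1 / (real m + real CARD('n))) *\<^sub>R all_ones_matrix) ** (adj_matrix E - 2 *\<^sub>R all_ones_matrix))"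
    proof
      fix y assume "y \<in> \<Lambda>1"
      hence "y \<notin> ev (adj_matrix E)"
        "(y + 2 * real m) * (all_ones_vec \<bullet> (matrix_inv (adj_matrix E - y *\<^sub>R mat 1) *v all_ones_vec)) - real m = 0"
        using L1 A_def by auto
      thus "y \<in> ev ((mat 1 - (1 / (real m + real CARD('n))) *\<^sub>R all_ones_matrix) ** (adj_matrix E - 2 *\<^sub>R all_ones_matrix))"
        using L1_ev[OF _ mpos] by blast
    qed
    hence f1: "finite \<Lambda>1" using ev_finite finite_subset by blast
    show ?thesis using f0' f1 f2 f3 by simp
  qed
  have minL: "Min ?L = lam" by (rule Min_eqI[OF finL]) (use geL inL in auto)
  have "QEC ?H = - 2 - lam" unfolding QEC_def
  proof (rule cSup_eq_maximum)
    show "- 2 - lam \<in> {\<Sum>x\<in>UNIV. \<Sum>y\<in>UNIV. real (graph_dist ?H x y) * f x * f y |f.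
        (\<Sum>x\<in>UNIV. f x * f x) = 1 \<and> sum f UNIV = 0}"
      using R_eq[OF irrH dH f0(1) f0(2)] f0 unfolding lam_def
      by (intro CollectI exI[of _ f0]) simp
  next
    fix x assume "x \<in> {\<Sum>x\<in>UNIV. \<Sum>y\<in>UNIV. real (graph_dist ?H x y) * f x * f y |f.
        (\<Sum>x\<in>UNIV. f x * f x) = 1 \<and> sum f UNIV = 0}"
    then obtain f :: "('m + 'n) \<Rightarrow> real" where f: "(\<Sum>x\<in>UNIV. f x * f x) = 1" "sum f UNIV = 0"
      and x: "x = (\<Sum>x\<in>UNIV. \<Sum>y\<in>UNIV. real (graph_dist ?H x y) * f x * f y)" by blast
    have "x = - 2 - Qf ?H f" using x R_eq[OF irrH dH f(2) f(1)] by simp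
    moreover have "lam \<le> Qf ?H f" using min f unfolding lam_def by auto
    ultimately show "x \<le> - 2 - lam" by simp
  qed
  thus ?thesis using minL by simp
qed

end
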